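(* Let $\mathcal A$ be a unital $A_\infty$-category with unit transformation $\mathbf i^{\mathcal A}$ and let $f:\mathcal A\to\mathcal B$ be an $A_\infty$-functor. The following are equivalent: (C6) for all $X,Y\in\mathrm{Ob}\,\mathcal A$ the chain map $f_1:(s\mathcal A(X,Y),b_1)\to(s\mathcal B(Xf,Yf),b_1)$ is homotopic to $0$; (C7) for every $X\in\mathrm{Ob}\,\mathcal A$ the chain map $f_1:(s\mathcal A(X,X),b_1)\to(s\mathcal B(Xf,Xf),b_1)$ is homotopic to $0$; (C8) for every $X\in\mathrm{Ob}\,\mathcal A$ the induced map $H^\bullet(f_1):H^\bullet(s\mathcal A(X,X),b_1)\to H^\bullet(s\mathcal B(Xf,Xf),b_1)$ is zero; (C9) for every $X\in\mathrm{Ob}\,\mathcal A$ there is ${}_Xw\in(s\mathcal B)^{-2}(Xf,Xf)$ with ${}_X\mathbf i^{\mathcal A}_0f_1={}_Xw\,b_1$.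
   Context: Conventions: $\Bbbk$ commutative ring, $\otimes=\otimes_\Bbbk$ with Koszul signs, maps written on the right. $s$ denotes suspension and $T^ns\mathcal A(X,Y)=\bigoplus s\mathcal A(X,X_1)\otimes\cdots\otimes s\mathcal A(X_{n-1},Y)$. An $A_\infty$-category has degree 1 maps $b_n:T^ns\mathcal A\to s\mathcal A$ with $\sum(1^{\otimes r}\otimes b_n\otimes1^{\otimes t})b_{r+1+t}=0$; an $A_\infty$-functor $f$ has an object map and degree 0 components $f_n$ ($n\ge1$) with $\sum(f_{i_1}\otimes\cdots\otimes f_{i_l})b_l=\sum(1^{\otimes r}\otimes b_n\otimes1^{\otimes t})f_{r+1+t}$. Natural $A_\infty$-transformations, equivalence $\equiv$ and $(r\otimes p)B_2$ are as usual: a natural transformation $r:f\to g$ is a family $r_n:T^ns\mathcal A(X_0,X_n)\to s\mathcal B(X_0f,X_ng)$ ($n\ge0$) of degree $-1$ with $\sum(f_{i_\bullet}\otimes\cdots\otimes r_k\otimes g_{j_\bullet}\otimes\cdots)b_{q+1+t}+\sum(1^{\otimes q}\otimes b_m\otimes1^{\otimes t})r_{q+1+t}=0$; $(r\otimes p)B_2$ has components $\sum(f_{a_\bullet}\otimes\cdots\otimes r_j\otimes g_{c_\bullet}\otimes\cdots\otimes p_t\otimes h_{e_\bullet}\otimes\cdots)b_{\alpha+\beta+\gamma+2}$; $r\equiv p$ if $r-p=[v,b]$ for a degree $-2$ family $v$. A unit transformation of $\mathcal A$ is a natural $\mathbf i^{\mathcal A}:\mathrm{id}_{\mathcal A}\to\mathrm{id}_{\mathcal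 A}$ with $(\mathbf i^{\mathcal A}\otimes\mathbf i^{\mathcal A})B_2\equiv\mathbf i^{\mathcal A}$ such that the chain maps $(1\otimes{}_Y\mathbf i^{\mathcal A}_0)b_2$ and $({}_X\mathbf i^{\mathcal A}_0\otimes1)b_2$ of $(s\mathcal A(X,Y),b_1)$ are homotopy invertible for all $X,Y$, where ${}_X\mathbf i^{\mathcal A}_0\in(s\mathcal A)^{-1}(X,X)$ is the image of $1$; $\mathcal A$ is unital if it has one. *)

theory Defs
  imports Main "HOL.Modules"
begin

text \<open>The graded hom-modules (sA)^n(X,Y) are given as k-submodules
 H X Y n of an ambient k-module (a type 'a with scalar action sc).  A degree e map
 T^m sA -> sB is encoded (via the universal property of the tensor product) as a
 family of k-multilinear maps phi Xs ds xs, where Xs = [X0,...,Xm] are the objects,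
 ds = [d1,...,dm] the degrees and xs = [x1,...,xm] with xi in H X(i-1) Xi di.
 Maps are written on the right, so the Koszul sign of (1^r (x) phi (x) 1^t) on
 x1 (x) ... (x) xm is (-1)^(deg phi * (d(r+n+1)+...+dm)).\<close>

definition ksign :: "int \<Rightarrow> 'a::ab_group_add \<Rightarrow> 'a" where
  "ksign k x = (if even k then x else - x)"

definition args_ok :: "('o \<Rightarrow> 'o \<Rightarrow> int \<Rightarrow> 'a set) \<Rightarrow> 'o list \<Rightarrow> int list \<Rightarrow> 'a list \<Rightarrow> bool" where
  "args_ok H Xs ds xs \<longleftrightarrow> length Xs = Suc (length ds) \<and> length xs = length ds \<and>
     (\<forall>i<length ds. xs ! i \<in> H (Xs ! i) (Xs ! Suc i) (ds ! i))"

definition mlmap :: "('k::comm_ring_1 \<Rightarrow> 'a::ab_group_add \<Rightarrow> 'a) \<Rightarrow> ('k \<Rightarrow> 'b::ab_group_add \<Rightarrow> 'b)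
   \<Rightarrow> ('o \<Rightarrow> 'o \<Rightarrow> int \<Rightarrow> 'a set) \<Rightarrow> ('p \<Rightarrow> 'p \<Rightarrow> int \<Rightarrow> 'b set) \<Rightarrow> ('o \<Rightarrow> 'p)
   \<Rightarrow> nat \<Rightarrow> int \<Rightarrow> ('o list \<Rightarrow> int list \<Rightarrow> 'a list \<Rightarrow> 'b) \<Rightarrow> bool" where
  "mlmap sc sc' H H' ob m e phi \<longleftrightarrow>
     (\<forall>Xs ds xs. args_ok H Xs ds xs \<and> length ds = m \<longrightarrow>
        phi Xs ds xs \<in> H' (ob (hd Xs)) (ob (last Xs)) (sum_list ds + e)) \<and>
     (\<forall>Xs ds xs i x y c. args_ok H Xs ds xs \<and> length ds = m \<and> i < m \<and>
        x \<in> H (Xs ! i) (Xs ! Suc i) (ds ! i) \<and> y \<in> H (Xs ! i) (Xs ! Suc i) (ds ! i) \<longrightarrow>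
        phi Xs ds (xs[i := x + y]) = phi Xs ds (xs[i := x]) + phi Xs ds (xs[i := y]) \<and>
        phi Xs ds (xs[i := sc c x]) = sc' c (phi Xs ds (xs[i := x])))"

text \<open>The term (1^r (x) phi (x) 1^t) psi applied to x1 (x) ... (x) xm, where phi
 (of degree e) acts on the block x(r+1),...,x(r+n) (n may be 0).\<close>
definition ins_at :: "('o list \<Rightarrow> int list \<Rightarrow> 'a list \<Rightarrow> 'c::ab_group_add)
   \<Rightarrow> ('o list \<Rightarrow> int list \<Rightarrow> 'a list \<Rightarrow> 'a) \<Rightarrow> int \<Rightarrow> nat \<Rightarrow> nat
   \<Rightarrow> 'o list \<Rightarrow> int list \<Rightarrow> 'a list \<Rightarrow> 'c" where
  "ins_at psi phi e r n Xs ds xs =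
     ksign (e * sum_list (drop (r + n) ds))
       (psi (take (Suc r) Xs @ drop (r + n) Xs)
            (take r ds @ [sum_list (take n (drop r ds)) + e] @ drop (r + n) ds)
            (take r xs @ [phi (take (Suc n) (drop r Xs)) (take n (drop r ds)) (take n (drop r xs))]
               @ drop (r + n) xs))"

text \<open>The term (1^a (x) r_j (x) 1^c (x) p_t (x) 1^e) b, both r, p of degree -1.\<close>
definition ins2_at :: "('o list \<Rightarrow> int list \<Rightarrow> 'a list \<Rightarrow> 'a::ab_group_add)
   \<Rightarrow> ('o list \<Rightarrow> int list \<Rightarrow> 'a list \<Rightarrow> 'a) \<Rightarrow> ('o list \<Rightarrow> int list \<Rightarrow> 'a list \<Rightarrow> 'a)
   \<Rightarrow> nat \<Rightarrow> nat \<Rightarrow> nat \<Rightarrow> nat \<Rightarrow> 'o list \<Rightarrow> int list \<Rightarrow> 'a list \<Rightarrow> 'a" where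
  "ins2_at b r p a j c t Xs ds xs =
     (let i2 = a + j + c in
      ksign (- sum_list (drop (a + j) ds) - sum_list (drop (i2 + t) ds))
       (b (take (Suc a) Xs @ take (Suc c) (drop (a + j) Xs) @ drop (i2 + t) Xs)
          (take a ds @ [sum_list (take j (drop a ds)) - 1] @ take c (drop (a + j) ds)
             @ [sum_list (take t (drop i2 ds)) - 1] @ drop (i2 + t) ds)
          (take a xs @ [r (take (Suc j) (drop a Xs)) (take j (drop a ds)) (take j (drop a xs))]
             @ take c (drop (a + j) xs)
             @ [p (take (Suc t) (drop i2 Xs)) (take t (drop i2 ds)) (take t (drop i2 xs))]
             @ drop (i2 + t) xs)))"

text \<open>Components m of (r (x) p)B_2 for r, p : id -> id.\<close>
definition B2 :: "('o list \<Rightarrow> int list \<Rightarrow> 'a list \<Rightarrow> 'a::ab_group_add)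
   \<Rightarrow> ('o list \<Rightarrow> int list \<Rightarrow> 'a list \<Rightarrow> 'a) \<Rightarrow> ('o list \<Rightarrow> int list \<Rightarrow> 'a list \<Rightarrow> 'a)
   \<Rightarrow> 'o list \<Rightarrow> int list \<Rightarrow> 'a list \<Rightarrow> 'a" where
  "B2 b r p Xs ds xs =
     (let m = length ds in
      \<Sum>a\<le>m. \<Sum>j\<le>m - a. \<Sum>c\<le>m - a - j. \<Sum>t\<le>m - a - j - c. ins2_at b r p a j c t Xs ds xs)"

definition ainf_cat :: "('k::comm_ring_1 \<Rightarrow> 'a::ab_group_add \<Rightarrow> 'a)
   \<Rightarrow> ('o \<Rightarrow> 'o \<Rightarrow> int \<Rightarrow> 'a set) \<Rightarrow> ('o list \<Rightarrow> int list \<Rightarrow> 'a list \<Rightarrow> 'a) \<Rightarrow> bool" where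
  "ainf_cat sc H b \<longleftrightarrow> module sc \<and> (\<forall>X Y n. module.subspace sc (H X Y n)) \<and>
     (\<forall>m\<ge>1. mlmap sc sc H H id m 1 b) \<and>
     (\<forall>Xs ds xs. args_ok H Xs ds xs \<and> length ds \<ge> 1 \<longrightarrow>
        (\<Sum>r\<le>length ds. \<Sum>n\<in>{1..length ds - r}. ins_at b b 1 r n Xs ds xs) = 0)"

definition compositions :: "nat \<Rightarrow> nat list set" where
  "compositions m = {is. (\<forall>i\<in>set is. 0 < i) \<and> sum_list is = m}"

fun oblocks :: "nat list \<Rightarrow> 'o list \<Rightarrow> 'o list" where
  "oblocks [] Xs = [hd Xs]"
| "oblocks (i # is) Xs = hd Xs # oblocks is (drop i Xs)"

fun dblocks :: "nat list \<Rightarrow> int list \<Rightarrow> int list" where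
  "dblocks [] ds = []"
| "dblocks (i # is) ds = sum_list (take i ds) # dblocks is (drop i ds)"

fun fblocks :: "('o list \<Rightarrow> int list \<Rightarrow> 'a list \<Rightarrow> 'b) \<Rightarrow> nat list \<Rightarrow> 'o list \<Rightarrow> int list \<Rightarrow> 'a list \<Rightarrow> 'b list" where
  "fblocks f [] Xs ds xs = []"
| "fblocks f (i # is) Xs ds xs =
     f (take (Suc i) Xs) (take i ds) (take i xs) # fblocks f is (drop i Xs) (drop i ds) (drop i xs)"

definition ainf_functor :: "('k::comm_ring_1 \<Rightarrow> 'a::ab_group_add \<Rightarrow> 'a)
   \<Rightarrow> ('o \<Rightarrow> 'o \<Rightarrow> int \<Rightarrow> 'a set) \<Rightarrow> ('o list \<Rightarrow> int list \<Rightarrow> 'a list \<Rightarrow> 'a)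
   \<Rightarrow> ('k \<Rightarrow> 'b::ab_group_add \<Rightarrow> 'b)
   \<Rightarrow> ('p \<Rightarrow> 'p \<Rightarrow> int \<Rightarrow> 'b set) \<Rightarrow> ('p list \<Rightarrow> int list \<Rightarrow> 'b list \<Rightarrow> 'b)
   \<Rightarrow> ('o \<Rightarrow> 'p) \<Rightarrow> ('o list \<Rightarrow> int list \<Rightarrow> 'a list \<Rightarrow> 'b) \<Rightarrow> bool" where
  "ainf_functor scA HA bA scB HB bB fo f \<longleftrightarrow>
     (\<forall>m\<ge>1. mlmap scA scB HA HB fo m 0 f) \<and>
     (\<forall>Xs ds xs. args_ok HA Xs ds xs \<and> length ds \<ge> 1 \<longrightarrow>
        (\<Sum>is\<in>compositions (length ds).
            bB (map fo (oblocks is Xs)) (dblocks is ds) (fblocks f is Xs ds xs))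
        = (\<Sum>r\<le>length ds. \<Sum>n\<in>{1..length ds - r}. ins_at f bA 1 r n Xs ds xs))"

definition glin :: "('k::comm_ring_1 \<Rightarrow> 'a::ab_group_add \<Rightarrow> 'a) \<Rightarrow> ('k \<Rightarrow> 'b::ab_group_add \<Rightarrow> 'b)
   \<Rightarrow> (int \<Rightarrow> 'a set) \<Rightarrow> (int \<Rightarrow> 'b set) \<Rightarrow> int \<Rightarrow> (int \<Rightarrow> 'a \<Rightarrow> 'b) \<Rightarrow> bool" where
  "glin sc sc' C C' e phi \<longleftrightarrow>
     (\<forall>n. \<forall>x\<in>C n. phi n x \<in> C' (n + e)) \<and>
     (\<forall>n. \<forall>x\<in>C n. \<forall>y\<in>C n. phi n (x + y) = phi n x + phi n y) \<and>
     (\<forall>n c. \<forall>x\<in>C n. phi n (sc c x) = sc' c (phi n x))"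

definition chain_map :: "('k::comm_ring_1 \<Rightarrow> 'a::ab_group_add \<Rightarrow> 'a) \<Rightarrow> ('k \<Rightarrow> 'b::ab_group_add \<Rightarrow> 'b)
   \<Rightarrow> (int \<Rightarrow> 'a set) \<Rightarrow> (int \<Rightarrow> 'a \<Rightarrow> 'a) \<Rightarrow> (int \<Rightarrow> 'b set) \<Rightarrow> (int \<Rightarrow> 'b \<Rightarrow> 'b)
   \<Rightarrow> (int \<Rightarrow> 'a \<Rightarrow> 'b) \<Rightarrow> bool" where
  "chain_map sc sc' C d C' d' phi \<longleftrightarrow> glin sc sc' C C' 0 phi \<and>
     (\<forall>n. \<forall>x\<in>C n. d' n (phi n x) = phi (n + 1) (d n x))"

definition homotopic :: "('k::comm_ring_1 \<Rightarrow> 'a::ab_group_add \<Rightarrow> 'a) \<Rightarrow> ('k \<Rightarrow> 'b::ab_group_add \<Rightarrow> 'b)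
   \<Rightarrow> (int \<Rightarrow> 'a set) \<Rightarrow> (int \<Rightarrow> 'a \<Rightarrow> 'a) \<Rightarrow> (int \<Rightarrow> 'b set) \<Rightarrow> (int \<Rightarrow> 'b \<Rightarrow> 'b)
   \<Rightarrow> (int \<Rightarrow> 'a \<Rightarrow> 'b) \<Rightarrow> (int \<Rightarrow> 'a \<Rightarrow> 'b) \<Rightarrow> bool" where
  "homotopic sc sc' C d C' d' phi psi \<longleftrightarrow>
     (\<exists>h. glin sc sc' C C' (-1) h \<and>
        (\<forall>n. \<forall>x\<in>C n. phi n x - psi n x = h (n + 1) (d n x) + d' (n - 1) (h n x)))"

definition homotopy_invertible :: "('k::comm_ring_1 \<Rightarrow> 'a::ab_group_add \<Rightarrow> 'a)
   \<Rightarrow> (int \<Rightarrow> 'a set) \<Rightarrow> (int \<Rightarrow> 'a \<Rightarrow> 'a) \<Rightarrow> (int \<Rightarrow> 'a \<Rightarrow> 'a) \<Rightarrow> bool" where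
  "homotopy_invertible sc C d phi \<longleftrightarrow> chain_map sc sc C d C d phi \<and>
     (\<exists>psi. chain_map sc sc C d C d psi \<and>
        homotopic sc sc C d C d (\<lambda>n x. psi n (phi n x)) (\<lambda>n x. x) \<and>
        homotopic sc sc C d C d (\<lambda>n x. phi n (psi n x)) (\<lambda>n x. x))"

text \<open>Unit transformation i : id -> id of the A-infinity category (sc,H,b).
 For the identity functor (id_1 = 1, id_n = 0 for n >= 2) the naturality equation
 and [v,b] unfold to the sums below.\<close>
definition unit_transf :: "('k::comm_ring_1 \<Rightarrow> 'a::ab_group_add \<Rightarrow> 'a)
   \<Rightarrow> ('o \<Rightarrow> 'o \<Rightarrow> int \<Rightarrow> 'a set) \<Rightarrow> ('o list \<Rightarrow> int list \<Rightarrow> 'a list \<Rightarrow> 'a)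
   \<Rightarrow> ('o list \<Rightarrow> int list \<Rightarrow> 'a list \<Rightarrow> 'a) \<Rightarrow> bool" where
  "unit_transf sc H b i \<longleftrightarrow>
     (\<forall>m. mlmap sc sc H H id m (-1) i) \<and>
     (\<forall>Xs ds xs. args_ok H Xs ds xs \<longrightarrow>
        (\<Sum>q\<le>length ds. \<Sum>k\<le>length ds - q. ins_at b i (-1) q k Xs ds xs)
        + (\<Sum>q\<le>length ds. \<Sum>n\<in>{1..length ds - q}. ins_at i b 1 q n Xs ds xs) = 0) \<and>
     (\<exists>v. (\<forall>m. mlmap sc sc H H id m (-2) v) \<and>
        (\<forall>Xs ds xs. args_ok H Xs ds xs \<longrightarrow>
           B2 b i i Xs ds xs - i Xs ds xs =
             (\<Sum>q\<le>length ds. \<Sum>k\<le>length ds - q. ins_at b v (-2) q k Xs ds xs)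
             - (\<Sum>q\<le>length ds. \<Sum>n\<in>{1..length ds - q}. ins_at v b 1 q n Xs ds xs))) \<and>
     (\<forall>X Y. homotopy_invertible sc (H X Y) (\<lambda>n x. b [X, Y] [n] [x])
               (\<lambda>n x. ins_at b i (-1) 1 0 [X, Y] [n] [x]) \<and>
            homotopy_invertible sc (H X Y) (\<lambda>n x. b [X, Y] [n] [x])
               (\<lambda>n x. ins_at b i (-1) 0 0 [X, Y] [n] [x]))"

end

theory Submission
  imports Defs
begin


lemma args_ok0: "args_ok H [X] [] []" by (simp add: args_ok_def)
lemma args_ok1: "args_ok H [X,Y] [n] [x] \<longleftrightarrow> x \<in> H X Y n"
  by (simp add: args_ok_def)
lemma args_ok2: "args_ok H [X,Y,Z] [n,m] [x,y] \<longleftrightarrow> x \<in> H X Y n \<and> y \<in> H Y Z m"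
  by (auto simp: args_ok_def less_Suc_eq nth_Cons')

lemma mlmap_mem: "mlmap sc sc' H H' ob m e phi \<Longrightarrow> args_ok H Xs ds xs \<Longrightarrow> length ds = m \<Longrightarrow>
   phi Xs ds xs \<in> H' (ob (hd Xs)) (ob (last Xs)) (sum_list ds + e)"
  unfolding mlmap_def by blast

lemma mlmap_lin: "mlmap sc sc' H H' ob m e phi \<Longrightarrow> args_ok H Xs ds xs \<Longrightarrow> length ds = m \<Longrightarrow> i < m \<Longrightarrow>
   x \<in> H (Xs ! i) (Xs ! Suc i) (ds ! i) \<Longrightarrow> y \<in> H (Xs ! i) (Xs ! Suc i) (ds ! i) \<Longrightarrow>
        phi Xs ds (xs[i := x + y]) = phi Xs ds (xs[i := x]) + phi Xs ds (xs[i := y]) \<and>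
        phi Xs ds (xs[i := sc c x]) = sc' c (phi Xs ds (xs[i := x]))"
  unfolding mlmap_def by blast

lemma ml1:
  assumes "mlmap sc sc' H H' ob (Suc 0) e phi" "x \<in> H X Y n"
  shows "phi [X,Y] [n] [x] \<in> H' (ob X) (ob Y) (n+e)"
    "y \<in> H X Y n \<Longrightarrow> phi [X,Y] [n] [x+y] = phi [X,Y] [n] [x] + phi [X,Y] [n] [y]"
    "phi [X,Y] [n] [sc c x] = sc' c (phi [X,Y] [n] [x])"
proof -
  have a: "args_ok H [X,Y] [n] [x]" using assms(2) by (simp add: args_ok1)
  show "phi [X,Y] [n] [x] \<in> H' (ob X) (ob Y) (n+e)"
    using mlmap_mem[OF assms(1) a] by simp
  show "y \<in> H X Y n \<Longrightarrow> phi [X,Y] [n] [x+y] = phi [X,Y] [n] [x] + phi [X,Y] [n] [y]"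
    using mlmap_lin[OF assms(1) a, of 0 x y] assms(2) by simp
  show "phi [X,Y] [n] [sc c x] = sc' c (phi [X,Y] [n] [x])"
    using mlmap_lin[OF assms(1) a, of 0 x x c] assms(2) by simp
qed

lemma ml2:
  assumes "mlmap sc sc' H H' ob 2 e phi" "x \<in> H X Y n" "z \<in> H Y Z m"
  shows "phi [X,Y,Z] [n,m] [x,z] \<in> H' (ob X) (ob Z) (n+m+e)"
    "y \<in> H X Y n \<Longrightarrow> phi [X,Y,Z] [n,m] [x+y,z] = phi [X,Y,Z] [n,m] [x,z] + phi [X,Y,Z] [n,m] [y,z]"
    "phi [X,Y,Z] [n,m] [sc c x,z] = sc' c (phi [X,Y,Z] [n,m] [x,z])"
    "y \<in> H Y Z m \<Longrightarrow> phi [X,Y,Z] [n,m] [x,z+y] = phi [X,Y,Z] [n,m] [x,z] + phi [X,Y,Z] [n,m] [x,y]"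
proof -
  have a: "args_ok H [X,Y,Z] [n,m] [x,z]" using assms(2,3) by (simp add: args_ok2)
  show "phi [X,Y,Z] [n,m] [x,z] \<in> H' (ob X) (ob Z) (n+m+e)"
    using mlmap_mem[OF assms(1) a] by (simp add: add.assoc)
  show "y \<in> H X Y n \<Longrightarrow> phi [X,Y,Z] [n,m] [x+y,z] = phi [X,Y,Z] [n,m] [x,z] + phi [X,Y,Z] [n,m] [y,z]"
    using mlmap_lin[OF assms(1) a, of 0 x y] assms(2) by simp
  show "phi [X,Y,Z] [n,m] [sc c x,z] = sc' c (phi [X,Y,Z] [n,m] [x,z])"
    using mlmap_lin[OF assms(1) a, of 0 x x c] assms(2) by simp
  show "y \<in> H Y Z m \<Longrightarrow> phi [X,Y,Z] [n,m] [x,z+y] = phi [X,Y,Z] [n,m] [x,z] + phi [X,Y,Z] [n,m] [x,y]"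
    using mlmap_lin[OF assms(1) a, of 1 z y] assms(3) by simp
qed

lemma len_le_sum: "\<forall>i\<in>set is. 0 < i \<Longrightarrow> length is \<le> sum_list (is::nat list)"
  by (induction "is") auto

lemma comp1: "compositions 1 = {[1]}"
proof -
  { fix "is" assume h: "is \<in> compositions 1"
    hence p: "\<forall>i\<in>set is. 0 < i" "sum_list is = 1" by (auto simp: compositions_def)
    hence "length is \<le> 1" using len_le_sum[OF p(1)] by simp
    with p have "is = [1]"
      by (cases "is") auto }
  thus ?thesis by (auto simp: compositions_def)
qed

lemma comp2: "compositions 2 = {[2],[1,1]}"
proof -
  { fix "is" assume h: "is \<in> compositions 2"
    hence p: "\<forall>i\<in>set is. 0 < i" "sum_list is = 2" by (auto simp: compositions_def)
    hence "length is \<le> 2" using len_le_sum[OF p(1)] by simp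
    with p have "is = [2] \<or> is = [1,1]"
      apply (cases "is"; simp)
      subgoal for a l by (cases l; cases "tl l"; auto) done }
  thus ?thesis by (auto simp: compositions_def)
qed



lemma ksign0[simp]: "ksign 0 x = x" by (simp add: ksign_def)
lemma comp1s: "compositions (Suc 0) = {[1]}" using comp1 by simp
lemma comp2s: "compositions (Suc (Suc 0)) = {[2],[1,1]}" using comp2 by (simp add: numeral_2_eq_2)

lemma unit0: "unit_transf sc H b i \<Longrightarrow> b [X,X] [-1] [i [X] [] []] = 0"
  unfolding unit_transf_def
  apply (elim conjE)
  apply (drule spec[of _ "[X]"], drule spec[of _ "[]"], drule spec[of _ "[]"])
  by (simp add: args_ok0 ins_at_def ksign_def)

lemma fun1:
  assumes "ainf_functor scA HA bA scB HB bB fo f" "x \<in> HA X Y n"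
  shows "bB [fo X, fo Y] [n] [f [X,Y] [n] [x]] = f [X,Y] [n+1] [bA [X,Y] [n] [x]]"
  using assms unfolding ainf_functor_def
  apply (elim conjE)
  apply (drule spec[of _ "[X,Y]"], drule spec[of _ "[n]"], drule spec[of _ "[x]"])
  by (simp add: args_ok1 ins_at_def ksign_def comp1s)

lemma fun2:
  assumes "ainf_functor scA HA bA scB HB bB fo f" "x \<in> HA X Y n" "z \<in> HA Y Z m"
  shows "bB [fo X, fo Z] [n+m] [f [X,Y,Z] [n,m] [x,z]] + bB [fo X, fo Y, fo Z] [n,m] [f [X,Y] [n] [x], f [Y,Z] [m] [z]]
    = f [X,Y,Z] [n,m+1] [x, bA [Y,Z] [m] [z]] + (ksign m (f [X,Y,Z] [n+1,m] [bA [X,Y] [n] [x], z]) + f [X,Z] [n+m+1] [bA [X,Y,Z] [n,m] [x,z]])"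
  using assms unfolding ainf_functor_def
  apply (elim conjE)
  apply (drule spec[of _ "[X,Y,Z]"], drule spec[of _ "[n,m]"], drule spec[of _ "[x,z]"])
  apply (simp add: args_ok2 ins_at_def comp2s numeral_2_eq_2 atMost_Suc)
  done

lemma cat2:
  assumes "ainf_cat sc H b" "x \<in> H X Y n" "z \<in> H Y Z m"
  shows "b [X,Y,Z] [n,m+1] [x, b [Y,Z] [m] [z]] + (ksign m (b [X,Y,Z] [n+1,m] [b [X,Y] [n] [x], z]) + b [X,Z] [n+m+1] [b [X,Y,Z] [n,m] [x,z]]) = 0"
  using assms unfolding ainf_cat_def
  apply (elim conjE)
  apply (drule spec[of _ "[X,Y,Z]"], drule spec[of _ "[n,m]"], drule spec[of _ "[x,z]"])
  apply (simp add: args_ok2 ins_at_def numeral_2_eq_2 atMost_Suc)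
  done


lemma transfer_hom:
  assumes modB: "module sc'" and subB: "\<forall>n. module.subspace sc' (C' n)"
    and modA: "module sc" and subC: "\<forall>n. module.subspace sc (C n)"
    and dC: "\<forall>n. \<forall>x\<in>C n. d n x \<in> C (n+1)"
    and dl': "\<forall>n. \<forall>a\<in>C' n. \<forall>b\<in>C' n. d' n (a - b) = d' n a - d' n b"
    and F: "chain_map sc sc' C d C' d' F"
    and hi: "homotopy_invertible sc C d phi"
    and K: "glin sc sc' C C' (-1) K"
    and KF: "\<forall>n. \<forall>x\<in>C n. F n (phi n x) = K (n+1) (d n x) + d' (n-1) (K n x)"
  shows "homotopic sc sc' C d C' d' F (\<lambda>n x. 0)"
proof -
  from hi obtain psi where psi: "chain_map sc sc C d C d psi"
     and hp: "homotopic sc sc C d C d (\<lambda>n x. phi n (psi n x)) (\<lambda>n x. x)"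
    unfolding homotopy_invertible_def by blast
  from hi have phiC: "\<forall>n. \<forall>x\<in>C n. phi n x \<in> C n"
    unfolding homotopy_invertible_def chain_map_def glin_def by simp
  from hp obtain H where Hg: "glin sc sc C C (-1) H"
    and He: "\<forall>n. \<forall>x\<in>C n. phi n (psi n x) - x = H (n + 1) (d n x) + d (n - 1) (H n x)"
    unfolding homotopic_def by blast
  have psiC: "\<And>n x. x \<in> C n \<Longrightarrow> psi n x \<in> C n" using psi unfolding chain_map_def glin_def by simp
  have psiadd: "\<And>n x y. x \<in> C n \<Longrightarrow> y \<in> C n \<Longrightarrow> psi n (x + y) = psi n x + psi n y"
    using psi unfolding chain_map_def glin_def by simp
  have psisc: "\<And>n x c. x \<in> C n \<Longrightarrow> psi n (sc c x) = sc c (psi n x)"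
    using psi unfolding chain_map_def glin_def by simp
  have psid: "\<And>n x. x \<in> C n \<Longrightarrow> d n (psi n x) = psi (n+1) (d n x)"
    using psi unfolding chain_map_def by simp
  have HC: "\<And>n x. x \<in> C n \<Longrightarrow> H n x \<in> C (n - 1)" using Hg unfolding glin_def by simp
  have Hadd: "\<And>n x y. x \<in> C n \<Longrightarrow> y \<in> C n \<Longrightarrow> H n (x + y) = H n x + H n y"
    using Hg unfolding glin_def by simp
  have Hsc: "\<And>n x c. x \<in> C n \<Longrightarrow> H n (sc c x) = sc c (H n x)"
    using Hg unfolding glin_def by simp
  have FC: "\<And>n x. x \<in> C n \<Longrightarrow> F n x \<in> C' n" using F unfolding chain_map_def glin_def by simp
  have Fadd: "\<And>n x y. x \<in> C n \<Longrightarrow> y \<in> C n \<Longrightarrow> F n (x + y) = F n x + F n y"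
    using F unfolding chain_map_def glin_def by simp
  have Fsc: "\<And>n x c. x \<in> C n \<Longrightarrow> F n (sc c x) = sc' c (F n x)"
    using F unfolding chain_map_def glin_def by simp
  have Fd: "\<And>n x. x \<in> C n \<Longrightarrow> d' n (F n x) = F (n+1) (d n x)"
    using F unfolding chain_map_def by simp
  have KC: "\<And>n x. x \<in> C n \<Longrightarrow> K n x \<in> C' (n - 1)" using K unfolding glin_def by simp
  have Kadd: "\<And>n x y. x \<in> C n \<Longrightarrow> y \<in> C n \<Longrightarrow> K n (x + y) = K n x + K n y"
    using K unfolding glin_def by simp
  have Ksc: "\<And>n x c. x \<in> C n \<Longrightarrow> K n (sc c x) = sc' c (K n x)"
    using K unfolding glin_def by simp
  define h where "h n x = K n (psi n x) - F (n - 1) (H n x)" for n x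
  have hC: "\<And>n x. x \<in> C n \<Longrightarrow> h n x \<in> C' (n - 1)"
    unfolding h_def by (rule module.subspace_diff[OF modB subB[rule_format] KC[OF psiC] FC[OF HC]])
  have "glin sc sc' C C' (-1) h"
    unfolding glin_def
  proof (intro conjI allI ballI)
    fix n x assume "x \<in> C n" thus "h n x \<in> C' (n + - 1)" using hC by simp
  next
    fix n x y assume xy: "x \<in> C n" "y \<in> C n"
    show "h n (x + y) = h n x + h n y"
      unfolding h_def using xy by (simp add: psiadd Hadd Kadd psiC HC Fadd)
  next
    fix n c x assume x: "x \<in> C n"
    show "h n (sc c x) = sc' c (h n x)"
      unfolding h_def using x
      by (simp add: psisc Hsc Ksc psiC HC Fsc module.scale_right_diff_distrib[OF modB])
  qed
  moreover have "\<forall>n. \<forall>x\<in>C n. F n x - 0 = h (n + 1) (d n x) + d' (n - 1) (h n x)"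
  proof (intro allI ballI)
    fix n x assume x: "x \<in> C n"
    have dx: "d n x \<in> C (n+1)" using dC x by blast
    have px: "psi n x \<in> C n" using psiC x .
    have e1: "h (n+1) (d n x) = K (n+1) (d n (psi n x)) - F n (H (n+1) (d n x))"
      unfolding h_def using psid[OF x] by simp
    have e2: "d' (n-1) (h n x) = d' (n-1) (K n (psi n x)) - F n (d (n - 1) (H n x))"
      unfolding h_def using dl' KC[OF px] FC[OF HC[OF x]] Fd[OF HC[OF x]] by simp
    have e3: "F n (phi n (psi n x)) = K (n+1) (d n (psi n x)) + d' (n-1) (K n (psi n x))"
      using KF px by blast
    have a1: "H (n+1) (d n x) \<in> C n" using HC[OF dx] by simp
    have a2: "d (n - 1) (H n x) \<in> C n" using dC HC[OF x] by fastforce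
    have e4: "phi n (psi n x) = (H (n+1) (d n x) + d (n - 1) (H n x)) + x"
      using He x by (metis diff_add_cancel)
    have a3: "H (n+1) (d n x) + d (n - 1) (H n x) \<in> C n"
      by (rule module.subspace_add[OF modA subC[rule_format] a1 a2])
    have e5: "F n (phi n (psi n x)) = F n (H (n+1) (d n x)) + F n (d (n - 1) (H n x)) + F n x"
      using e4 Fadd[OF a3 x] Fadd[OF a1 a2] by simp
    show "F n x - 0 = h (n + 1) (d n x) + d' (n - 1) (h n x)"
    proof -
      have "F n x = F n (phi n (psi n x)) - F n (H (n+1) (d n x)) - F n (d (n - 1) (H n x))"
        using e5 by (simp add: algebra_simps)
      also have "\<dots> = h (n + 1) (d n x) + d' (n - 1) (h n x)"
        unfolding e1 e2 e3 by (simp add: algebra_simps)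
      finally show ?thesis by simp
    qed
  qed
  ultimately show ?thesis unfolding homotopic_def by blast
qed
lemma lin_comb: "A + (B + P) = (Fp::'a::ab_group_add) \<Longrightarrow> P + (Q + R) = 0 \<Longrightarrow> Fp + (Q + R) = A + B"
proof -
  assume 1: "A + (B + P) = Fp" and 2: "P + (Q + R) = 0"
  have "Fp + (Q + R) = A + B + (P + (Q + R))" using 1 by (simp add: algebra_simps)
  thus ?thesis using 2 by simp
qed

theorem proposition6p2:
  fixes sA :: "'k::comm_ring_1 \<Rightarrow> 'a::ab_group_add \<Rightarrow> 'a"
    and HA :: "'o \<Rightarrow> 'o \<Rightarrow> int \<Rightarrow> 'a set"
    and bA :: "'o list \<Rightarrow> int list \<Rightarrow> 'a list \<Rightarrow> 'a"
    and iA :: "'o list \<Rightarrow> int list \<Rightarrow> 'a list \<Rightarrow> 'a"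
    and sB :: "'k \<Rightarrow> 'b::ab_group_add \<Rightarrow> 'b"
    and HB :: "'p \<Rightarrow> 'p \<Rightarrow> int \<Rightarrow> 'b set"
    and bB :: "'p list \<Rightarrow> int list \<Rightarrow> 'b list \<Rightarrow> 'b"
    and fo :: "'o \<Rightarrow> 'p"
    and f :: "'o list \<Rightarrow> int list \<Rightarrow> 'a list \<Rightarrow> 'b"
  assumes A: "ainf_cat sA HA bA"
    and unit: "unit_transf sA HA bA iA"
    and B: "ainf_cat sB HB bB"
    and F: "ainf_functor sA HA bA sB HB bB fo f"
  shows
    "((\<forall>X Y. homotopic sA sB (HA X Y) (\<lambda>n x. bA [X, Y] [n] [x])
              (HB (fo X) (fo Y)) (\<lambda>n y. bB [fo X, fo Y] [n] [y])
              (\<lambda>n x. f [X, Y] [n] [x]) (\<lambda>n x. 0))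
      \<longleftrightarrow>
      (\<forall>X. homotopic sA sB (HA X X) (\<lambda>n x. bA [X, X] [n] [x])
              (HB (fo X) (fo X)) (\<lambda>n y. bB [fo X, fo X] [n] [y])
              (\<lambda>n x. f [X, X] [n] [x]) (\<lambda>n x. 0)))
     \<and>
     ((\<forall>X. homotopic sA sB (HA X X) (\<lambda>n x. bA [X, X] [n] [x])
              (HB (fo X) (fo X)) (\<lambda>n y. bB [fo X, fo X] [n] [y])
              (\<lambda>n x. f [X, X] [n] [x]) (\<lambda>n x. 0))
      \<longleftrightarrow>
      (\<forall>X n x. x \<in> HA X X n \<and> bA [X, X] [n] [x] = 0 \<longrightarrow>
          (\<exists>y\<in>HB (fo X) (fo X) (n - 1). bB [fo X, fo X] [n - 1] [y] = f [X, X] [n] [x])))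
     \<and>
     ((\<forall>X n x. x \<in> HA X X n \<and> bA [X, X] [n] [x] = 0 \<longrightarrow>
          (\<exists>y\<in>HB (fo X) (fo X) (n - 1). bB [fo X, fo X] [n - 1] [y] = f [X, X] [n] [x]))
      \<longleftrightarrow>
      (\<forall>X. \<exists>w\<in>HB (fo X) (fo X) (-2). f [X, X] [-1] [iA [X] [] []] = bB [fo X, fo X] [-2] [w]))"
proof -
  note A' = A[unfolded ainf_cat_def]
  have modA: "module sA" by (rule conjunct1[OF A'])
  have subA: "\<forall>X Y n. module.subspace sA (HA X Y n)" by (rule conjunct1[OF conjunct2[OF A']])
  note Am = conjunct1[OF conjunct2[OF conjunct2[OF A']]]
  have bA1: "mlmap sA sA HA HA id (Suc 0) 1 bA" by (rule Am[rule_format]) simp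
  have bA2: "mlmap sA sA HA HA id 2 1 bA" by (rule Am[rule_format]) simp
  note B' = B[unfolded ainf_cat_def]
  have modB: "module sB" by (rule conjunct1[OF B'])
  have subB: "\<forall>X Y n. module.subspace sB (HB X Y n)" by (rule conjunct1[OF conjunct2[OF B']])
  note Bm = conjunct1[OF conjunct2[OF conjunct2[OF B']]]
  have bB1: "mlmap sB sB HB HB id (Suc 0) 1 bB" by (rule Bm[rule_format]) simp
  have bB2: "mlmap sB sB HB HB id 2 1 bB" by (rule Bm[rule_format]) simp
  note Fm = conjunct1[OF F[unfolded ainf_functor_def]]
  have f1: "mlmap sA sB HA HB fo (Suc 0) 0 f" by (rule Fm[rule_format]) simp
  have f2: "mlmap sA sB HA HB fo 2 0 f" by (rule Fm[rule_format]) simp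
  have iA0: "mlmap sA sA HA HA id 0 (-1) iA" by (rule conjunct1[OF unit[unfolded unit_transf_def], rule_format])
  have i0C: "\<And>X. iA [X] [] [] \<in> HA X X (-1)"
  proof -
    fix X
    have "iA [X] [] [] \<in> HA (id (hd [X])) (id (last [X])) (sum_list [] + -1)"
      by (rule conjunct1[OF iA0[unfolded mlmap_def], rule_format, OF conjI[OF args_ok0]]) simp
    thus "iA [X] [] [] \<in> HA X X (-1)" by simp
  qed
  have bi0: "\<And>X. bA [X,X] [-1] [iA [X] [] []] = 0" using unit0[OF unit] .
  have zA: "\<And>X Y n. 0 \<in> HA X Y n" using module.subspace_0[OF modA subA[rule_format]] .

  have c67: "(\<forall>X Y. homotopic sA sB (HA X Y) (\<lambda>n x. bA [X, Y] [n] [x])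
              (HB (fo X) (fo Y)) (\<lambda>n y. bB [fo X, fo Y] [n] [y])
              (\<lambda>n x. f [X, Y] [n] [x]) (\<lambda>n x. 0)) \<Longrightarrow>
      (\<forall>X. homotopic sA sB (HA X X) (\<lambda>n x. bA [X, X] [n] [x])
              (HB (fo X) (fo X)) (\<lambda>n y. bB [fo X, fo X] [n] [y])
              (\<lambda>n x. f [X, X] [n] [x]) (\<lambda>n x. 0))"
    by (rule allI) (drule spec, drule spec, assumption)
  have c78: "(\<forall>X. homotopic sA sB (HA X X) (\<lambda>n x. bA [X, X] [n] [x])
              (HB (fo X) (fo X)) (\<lambda>n y. bB [fo X, fo X] [n] [y])
              (\<lambda>n x. f [X, X] [n] [x]) (\<lambda>n x. 0)) \<Longrightarrow>
      (\<forall>X n x. x \<in> HA X X n \<and> bA [X, X] [n] [x] = 0 \<longrightarrow>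
          (\<exists>y\<in>HB (fo X) (fo X) (n - 1). bB [fo X, fo X] [n - 1] [y] = f [X, X] [n] [x]))"
  proof (intro allI impI)
    fix X n x
    assume h7: "\<forall>X. homotopic sA sB (HA X X) (\<lambda>n x. bA [X, X] [n] [x])
              (HB (fo X) (fo X)) (\<lambda>n y. bB [fo X, fo X] [n] [y])
              (\<lambda>n x. f [X, X] [n] [x]) (\<lambda>n x. 0)"
      and hx: "x \<in> HA X X n \<and> bA [X, X] [n] [x] = 0"
    from h7[rule_format, of X] obtain h where hg: "glin sA sB (HA X X) (HB (fo X) (fo X)) (-1) h"
      and he: "\<forall>n. \<forall>x\<in>HA X X n. f [X, X] [n] [x] - 0 = h (n + 1) (bA [X, X] [n] [x]) + bB [fo X, fo X] [n - 1] [h n x]"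
      unfolding homotopic_def by blast
    have h0: "h (n+1) 0 = 0"
    proof -
      have add: "\<forall>n. \<forall>x\<in>HA X X n. \<forall>y\<in>HA X X n. h n (x + y) = h n x + h n y"
        using hg unfolding glin_def by (elim conjE)
      have "h (n+1) (0 + 0) = h (n+1) 0 + h (n+1) 0" using add[rule_format, OF zA zA] .
      thus ?thesis by simp
    qed
    have "f [X, X] [n] [x] = bB [fo X, fo X] [n - 1] [h n x]"
      using he hx h0 by simp
    moreover have "h n x \<in> HB (fo X) (fo X) (n - 1)" using hg hx unfolding glin_def by simp
    ultimately show "\<exists>y\<in>HB (fo X) (fo X) (n - 1). bB [fo X, fo X] [n - 1] [y] = f [X, X] [n] [x]"
      by (intro bexI[of _ "h n x"]) simp_all
  qed
  have c89: "(\<forall>X n x. x \<in> HA X X n \<and> bA [X, X] [n] [x] = 0 \<longrightarrow>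
          (\<exists>y\<in>HB (fo X) (fo X) (n - 1). bB [fo X, fo X] [n - 1] [y] = f [X, X] [n] [x])) \<Longrightarrow>
      (\<forall>X. \<exists>w\<in>HB (fo X) (fo X) (-2). f [X, X] [-1] [iA [X] [] []] = bB [fo X, fo X] [-2] [w])"
  proof (intro allI)
    fix X
    assume h8: "\<forall>X n x. x \<in> HA X X n \<and> bA [X, X] [n] [x] = 0 \<longrightarrow>
          (\<exists>y\<in>HB (fo X) (fo X) (n - 1). bB [fo X, fo X] [n - 1] [y] = f [X, X] [n] [x])"
    have "\<exists>y\<in>HB (fo X) (fo X) (-1 - 1). bB [fo X, fo X] [-1 - 1] [y] = f [X, X] [-1] [iA [X] [] []]"
      using h8[rule_format, OF conjI[OF i0C bi0]] .
    then obtain y where "y \<in> HB (fo X) (fo X) (-2)" "bB [fo X, fo X] [-2] [y] = f [X, X] [-1] [iA [X] [] []]"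
      by auto
    thus "\<exists>w\<in>HB (fo X) (fo X) (-2). f [X, X] [-1] [iA [X] [] []] = bB [fo X, fo X] [-2] [w]"
      by (intro bexI[of _ y]) auto
  qed
  have c96: "(\<forall>X. \<exists>w\<in>HB (fo X) (fo X) (-2). f [X, X] [-1] [iA [X] [] []] = bB [fo X, fo X] [-2] [w]) \<Longrightarrow>
      (\<forall>X Y. homotopic sA sB (HA X Y) (\<lambda>n x. bA [X, Y] [n] [x])
              (HB (fo X) (fo Y)) (\<lambda>n y. bB [fo X, fo Y] [n] [y])
              (\<lambda>n x. f [X, Y] [n] [x]) (\<lambda>n x. 0))"
  proof (intro allI)
    fix X Y
    assume h9: "\<forall>X. \<exists>w\<in>HB (fo X) (fo X) (-2). f [X, X] [-1] [iA [X] [] []] = bB [fo X, fo X] [-2] [w]"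
    then obtain w where w: "w \<in> HB (fo Y) (fo Y) (-2)"
      and fw: "f [Y, Y] [-1] [iA [Y] [] []] = bB [fo Y, fo Y] [-2] [w]" by blast
    define i0 where "i0 = iA [Y] [] []"
    have i0: "i0 \<in> HA Y Y (-1)" unfolding i0_def by (rule i0C)
    have hi0: "homotopy_invertible sA (HA X Y) (\<lambda>n x. bA [X, Y] [n] [x])
               (\<lambda>n x. ins_at bA iA (-1) 1 0 [X, Y] [n] [x])"
    proof -
      have "\<forall>X Y. homotopy_invertible sA (HA X Y) (\<lambda>n x. bA [X, Y] [n] [x])
               (\<lambda>n x. ins_at bA iA (-1) 1 0 [X, Y] [n] [x]) \<and>
            homotopy_invertible sA (HA X Y) (\<lambda>n x. bA [X, Y] [n] [x])
               (\<lambda>n x. ins_at bA iA (-1) 0 0 [X, Y] [n] [x])"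
        using unit unfolding unit_transf_def by (elim conjE)
      thus ?thesis by (elim allE conjE)
    qed
    have "(\<lambda>n x. ins_at bA iA (-1) 1 0 [X, Y] [n] [x]) = (\<lambda>n x. bA [X,Y,Y] [n, -1] [x, i0])"
      by (simp add: ins_at_def i0_def fun_eq_iff)
    with hi0 have hi: "homotopy_invertible sA (HA X Y) (\<lambda>n x. bA [X, Y] [n] [x])
               (\<lambda>n x. bA [X,Y,Y] [n, -1] [x, i0])" by simp
    define K where "K n x = f [X,Y,Y] [n,-1] [x, i0] - bB [fo X, fo Y, fo Y] [n,-2] [f [X,Y] [n] [x], w]" for n x
    show "homotopic sA sB (HA X Y) (\<lambda>n x. bA [X, Y] [n] [x])
              (HB (fo X) (fo Y)) (\<lambda>n y. bB [fo X, fo Y] [n] [y])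
              (\<lambda>n x. f [X, Y] [n] [x]) (\<lambda>n x. 0)"
    proof (rule transfer_hom[OF modB _ modA _ _ _ _ hi, where K = K])
      show "\<forall>n. module.subspace sB (HB (fo X) (fo Y) n)" using subB by blast
      show "\<forall>n. module.subspace sA (HA X Y n)" using subA by blast
      show "\<forall>n. \<forall>x\<in>HA X Y n. bA [X, Y] [n] [x] \<in> HA X Y (n + 1)"
        using ml1(1)[OF bA1] by simp
      show "\<forall>n. \<forall>a\<in>HB (fo X) (fo Y) n. \<forall>b\<in>HB (fo X) (fo Y) n.
              bB [fo X, fo Y] [n] [a - b] = bB [fo X, fo Y] [n] [a] - bB [fo X, fo Y] [n] [b]"
      proof (intro allI ballI)
        fix n a b assume ab: "a \<in> HB (fo X) (fo Y) n" "b \<in> HB (fo X) (fo Y) n"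
        have amb: "a - b \<in> HB (fo X) (fo Y) n"
          by (rule module.subspace_diff[OF modB subB[rule_format] ab])
        have "bB [fo X, fo Y] [n] [(a - b) + b] = bB [fo X, fo Y] [n] [a - b] + bB [fo X, fo Y] [n] [b]"
          by (rule ml1(2)[OF bB1 amb ab(2)])
        thus "bB [fo X, fo Y] [n] [a - b] = bB [fo X, fo Y] [n] [a] - bB [fo X, fo Y] [n] [b]"
          by (simp add: algebra_simps)
      qed
      show "chain_map sA sB (HA X Y) (\<lambda>n x. bA [X, Y] [n] [x]) (HB (fo X) (fo Y))
              (\<lambda>n y. bB [fo X, fo Y] [n] [y]) (\<lambda>n x. f [X, Y] [n] [x])"
        unfolding chain_map_def glin_def
        using ml1[OF f1] fun1[OF F] by simp
      have f1C: "\<And>n x. x \<in> HA X Y n \<Longrightarrow> f [X,Y] [n] [x] \<in> HB (fo X) (fo Y) n"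
        using ml1(1)[OF f1] by simp
      have KC1: "\<And>n x. x \<in> HA X Y n \<Longrightarrow> f [X,Y,Y] [n,-1] [x, i0] \<in> HB (fo X) (fo Y) (n - 1)"
        using ml2(1)[OF f2 _ i0] by simp
      have KC2: "\<And>n x. x \<in> HA X Y n \<Longrightarrow> bB [fo X, fo Y, fo Y] [n,-2] [f [X,Y] [n] [x], w] \<in> HB (fo X) (fo Y) (n - 1)"
        using ml2(1)[OF bB2 f1C w] by simp
      show "glin sA sB (HA X Y) (HB (fo X) (fo Y)) (-1) K"
        unfolding glin_def
      proof (intro conjI allI ballI)
        fix n x assume x: "x \<in> HA X Y n"
        show "K n x \<in> HB (fo X) (fo Y) (n + - 1)"
          unfolding K_def using module.subspace_diff[OF modB subB[rule_format] KC1[OF x] KC2[OF x]] by simp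
      next
        fix n x y assume x: "x \<in> HA X Y n" and y: "y \<in> HA X Y n"
        show "K n (x + y) = K n x + K n y"
          unfolding K_def
          using ml2(2)[OF f2 x i0 y] ml1(2)[OF f1 x y] ml2(2)[OF bB2 f1C[OF x] w f1C[OF y]]
          by (simp add: algebra_simps)
      next
        fix n c x assume x: "x \<in> HA X Y n"
        show "K n (sA c x) = sB c (K n x)"
          unfolding K_def
          using ml2(3)[OF f2 x i0] ml1(3)[OF f1 x] ml2(3)[OF bB2 f1C[OF x] w]
          by (simp add: module.scale_right_diff_distrib[OF modB])
      qed
      show "\<forall>n. \<forall>x\<in>HA X Y n. f [X, Y] [n] [bA [X, Y, Y] [n, - 1] [x, i0]] =
             K (n + 1) (bA [X, Y] [n] [x]) + bB [fo X, fo Y] [n - 1] [K n x]"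
      proof (intro allI ballI)
        fix n x assume x: "x \<in> HA X Y n"
        have bx: "bA [X, Y] [n] [x] \<in> HA X Y (n+1)" using ml1(1)[OF bA1 x] by simp
        have z0: "f [X,Y,Y] [n,0] [x, 0] = 0"
        proof -
          have "f [X,Y,Y] [n,0] [x, 0 + 0] = f [X,Y,Y] [n,0] [x, 0] + f [X,Y,Y] [n,0] [x, 0]"
            by (rule ml2(4)[OF f2 x zA zA])
          thus ?thesis by simp
        qed
        have e1: "bB [fo X, fo Y] [n - 1] [f [X,Y,Y] [n,-1] [x,i0]] + bB [fo X, fo Y, fo Y] [n,-1] [f [X,Y] [n] [x], f [Y,Y] [-1] [i0]]
          = - f [X,Y,Y] [n+1,-1] [bA [X,Y] [n] [x], i0] + f [X,Y] [n] [bA [X,Y,Y] [n,-1] [x,i0]]"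
          using fun2[OF F x i0] z0 bi0[of Y] by (simp add: i0_def ksign_def)
        have e2: "bB [fo X, fo Y, fo Y] [n, -1] [f [X,Y] [n] [x], bB [fo Y, fo Y] [-2] [w]]
           + (bB [fo X, fo Y, fo Y] [n+1,-2] [bB [fo X, fo Y] [n] [f [X,Y] [n] [x]], w]
           + bB [fo X, fo Y] [n - 1] [bB [fo X, fo Y, fo Y] [n,-2] [f [X,Y] [n] [x], w]]) = 0"
          using cat2[OF B f1C[OF x] w] by (simp add: ksign_def)
        have e3: "bB [fo X, fo Y] [n] [f [X,Y] [n] [x]] = f [X,Y] [n+1] [bA [X, Y] [n] [x]]"
          by (rule fun1[OF F x])
        have e4: "bB [fo X, fo Y] [n - 1] [K n x] = bB [fo X, fo Y] [n - 1] [f [X,Y,Y] [n,-1] [x, i0]]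
             - bB [fo X, fo Y] [n - 1] [bB [fo X, fo Y, fo Y] [n,-2] [f [X,Y] [n] [x], w]]"
        proof -
          have amb: "K n x \<in> HB (fo X) (fo Y) (n - 1)"
            unfolding K_def by (rule module.subspace_diff[OF modB subB[rule_format] KC1[OF x] KC2[OF x]])
          have "bB [fo X, fo Y] [n - 1] [K n x + bB [fo X, fo Y, fo Y] [n,-2] [f [X,Y] [n] [x], w]]
             = bB [fo X, fo Y] [n - 1] [K n x] + bB [fo X, fo Y] [n - 1] [bB [fo X, fo Y, fo Y] [n,-2] [f [X,Y] [n] [x], w]]"
            by (rule ml1(2)[OF bB1 amb KC2[OF x]])
          thus ?thesis unfolding K_def by (simp add: algebra_simps)
        qed
        have e5: "K (n+1) (bA [X, Y] [n] [x]) = f [X,Y,Y] [n+1,-1] [bA [X, Y] [n] [x], i0]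
             - bB [fo X, fo Y, fo Y] [n+1,-2] [f [X,Y] [n+1] [bA [X, Y] [n] [x]], w]"
          unfolding K_def by simp
        show "f [X, Y] [n] [bA [X, Y, Y] [n, - 1] [x, i0]] =
             K (n + 1) (bA [X, Y] [n] [x]) + bB [fo X, fo Y] [n - 1] [K n x]"
          unfolding e4 e5 using e1 e2 e3 fw[folded i0_def]
          apply (simp add: algebra_simps)
          by (rule lin_comb, assumption+)
      qed
    qed
  qed
  note e1 = iffI[OF c67 c96[OF c89[OF c78]]]
  note e2 = iffI[OF c78 c67[OF c96[OF c89]]]
  note e3 = iffI[OF c89 c78[OF c67[OF c96]]]
  show ?thesis by (rule conjI[OF e1 conjI[OF e2 e3]])
qed

end
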